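(* Let $T$ be a trace (well formed, with a matching release for each acquire) and let $<$ be a strict partial order on $\mathrm{evts}(T)$ satisfying the MHB-Criteria. Then every predictable deadlock in $T$ for the lock set function $\mathrm{LH}_{<}$ is also a predictable deadlock in $T$ for the lock set function $\mathrm{LH}_T$; i.e. $\mathrm{PD}(\mathrm{LH}_{<})\subseteq\mathrm{PD}(\mathrm{LH}_T)$.
   Context: Events and traces. An event is a triple $e=(\alpha,t,op)$ with a unique identifier $\alpha$, a thread id $t$ and an operation $op$, which is one of $\mathit{rd}(x)$, $\mathit{wr}(x)$ (read/write of a shared variable $x$) or $\mathit{req}(l)$, $\mathit{acq}(l)$, $\mathit{rel}(l)$ (request, acquire, release of a lock $l$). Write $\mathrm{thd}(e)=t$. A trace is a finite list of events with distinct identifiers; $e\in T$ means $e$ occurs in $T$, $\mathrm{evts}(T)$ is its set of events, and $e<_T f$ means $e$ occurs at an earlier position than $f$ in $T$. An event $e$ is final in $T$ if there is no $f\in T$ with $e<_T f$ and $\mathrm{thd}(f)=\mathrm{thd}(e)$. Well formedness. $T$ is well formed if: (WF-Acq) for all $a=(t,\mathit{acq}(l))$, $a'=(t',\mathit{acq}(l))$ in $T$ with $a<_T a'$ there is $r=(t,\mathit{rel}(l))\in T$ with $a<_T r<_T a'$; (WF-Rel) for every $r=(t,\mathit{rel}(l))\in T$ there is $a=(t,\mathit{acq}(l))\in T$ with $a<_T r$ and no $r'=(t',\mathit{rel}(l))\in T$ with $a<_T r'<_T r$; (WF-Req) for every $a=(t,\mathit{acq}(l))\in T$ there is $q=(t,\mathit{req}(l))\in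 T$ with $q<_T a$ and no event of thread $t$ strictly between $q$ and $a$, and for every $q=(t,\mathit{req}(l))\in T$, the event of thread $t$ immediately following $q$ in $T$ (if any) is of the form $(t,\mathit{acq}(l))$. Standing assumption: $T$ is well formed and every acquire has a matching release in $T$. Correct reorderings. For a read $e=(\cdot,\mathit{rd}(x))\in T$, $\mathrm{lw}_T(e)$ is the write $f=(\cdot,\mathit{wr}(x))$ with $f<_T e$ and no write on $x$ strictly between them in $T$. A trace $T'$ is a correctly reordered prefix of $T$ if (CRP-WF) $T'$ is well formed and $\mathrm{evts}(T')\subseteq\mathrm{evts}(T)$; (CRP-PO) for every thread $t$ of $T'$, the subsequence of thread-$t$ events of $T'$ is a prefix of that of $T$; (CRP-LW) for every read $e\in T'$ with $f=\mathrm{lw}_T(e)$ we have $f=\mathrm{lw}_{T'}(e)$. $\mathrm{crp}(T)$ is the set of correctly reordered prefixes of $T$. Trace-based lock sets. Write $e\prec_T f$ if for every $T'\in\mathrm{crp}(T)$ with $f\in T'$ we have $e\in T'$ and $e<_{T'}f$. For $a=(t,\mathit{acq}(l))$, $r=(t,\mathit{rel}(l))\in T$, $e\in\mathrm{CS}_T(a,r)$ iff (CS-Enclosed) $a\prec_T e$ and $e\prec_T r$, and (CS-Match) there is no release $r'=(t,\mathit{rel}(l))\in T$ and $T'\in\mathrm{crp}(T)$ with $a<_{T'}r'<_{T'}e$. $\mathrm{LH}_T(e)=\{(l,t)\mid \exists a,r\in T,\ a=(t,\mathit{acq}(l)),\ e\in\mathrm{CS}_T(a,r)\}$. Partial-order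 lock sets. For a strict partial order $<$ on $\mathrm{evts}(T)$ and $a=(t,\mathit{acq}(l))$, $r=(t,\mathit{rel}(l))\in T$: $e\in\mathrm{CS}_{<}(a,r)$ iff (PO-CS-Enclosed) $a<e$ and $e<r$, and (PO-CS-Match) there is no release $r'=(t,\mathit{rel}(l))\in T$ and $T'\in\mathrm{crp}(T)$ with $a<_{T'}r'<_{T'}e$. $\mathrm{LH}_{<}(e)=\{(l,t)\mid \exists a,r\in T,\ a=(t,\mathit{acq}(l)),\ e\in\mathrm{CS}_{<}(a,r)\}$. The order $<$ satisfies the MHB-Criteria if whenever $e<f$, for every $T'\in\mathrm{crp}(T)$ with $f\in T'$ we have $e\in T'$ and $e<_{T'}f$. Deadlock patterns. A lock set function $L$ maps events of $T$ to sets of pairs (lock, thread id). Write $l\in L(e)$ if $(l,t)\in L(e)$ for some $t$. For such sets $M,N$ let $M\Cap N=\{l\mid (l,s)\in M,(l,t)\in N, s\neq t\}$. For $n>1$ and request events $q_i=(t_i,\mathit{req}(l_i))\in T$, the set $\{q_1,\dots,q_n\}$ is a deadlock pattern for $L$ if (DP-Thread) $\mathrm{thd}(q_i)\ne\mathrm{thd}(q_j)$ for $i\ne j$; (DP-Cycle) $l_i\in L(q_{(i \bmod n)+1})$ for every $i$; (DP-Guard) $L(q_i)\Cap L(q_j)=\emptyset$ for $i\neq j$. It is a predictable deadlock for $L$ if in addition there is a witness $T'\in\mathrm{crp}(T)$ in which each $q_i$ is final. $\mathrm{PD}(L)$ denotes the set of predictable deadlocks in $T$ for $L$. *)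

theory Defs
  imports Main "HOL-Library.Sublist"
begin

datatype ('v, 'l) operation = Rd 'v | Wr 'v | Req 'l | Acq 'l | Rel 'l

datatype ('t, 'v, 'l) event = Event (eid: nat) (thd: 't) (op: "('v, 'l) operation")

type_synonym ('t, 'v, 'l) trace = "('t, 'v, 'l) event list"

definition is_trace :: "('t, 'v, 'l) trace \<Rightarrow> bool" where
  "is_trace T \<longleftrightarrow> distinct (map eid T)"

definition before :: "('t, 'v, 'l) trace \<Rightarrow> ('t, 'v, 'l) event \<Rightarrow> ('t, 'v, 'l) event \<Rightarrow> bool" where
  "before T e f \<longleftrightarrow> (\<exists>i j. i < j \<and> j < length T \<and> T ! i = e \<and> T ! j = f)"

definition final :: "('t, 'v, 'l) trace \<Rightarrow> ('t, 'v, 'l) event \<Rightarrow> bool" where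
  "final T e \<longleftrightarrow> e \<in> set T \<and> \<not> (\<exists>f \<in> set T. before T e f \<and> thd f = thd e)"

definition wf_acq :: "('t, 'v, 'l) trace \<Rightarrow> bool" where
  "wf_acq T \<longleftrightarrow> (\<forall>a \<in> set T. \<forall>a' \<in> set T. \<forall>l.
      op a = Acq l \<and> op a' = Acq l \<and> before T a a' \<longrightarrow>
      (\<exists>r \<in> set T. thd r = thd a \<and> op r = Rel l \<and> before T a r \<and> before T r a'))"

definition wf_rel :: "('t, 'v, 'l) trace \<Rightarrow> bool" where
  "wf_rel T \<longleftrightarrow> (\<forall>r \<in> set T. \<forall>l. op r = Rel l \<longrightarrow>
      (\<exists>a \<in> set T. thd a = thd r \<and> op a = Acq l \<and> before T a r \<and>
         \<not> (\<exists>r' \<in> set T. op r' = Rel l \<and> before T a r' \<and> before T r' r)))"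

definition wf_req :: "('t, 'v, 'l) trace \<Rightarrow> bool" where
  "wf_req T \<longleftrightarrow>
    (\<forall>a \<in> set T. \<forall>l. op a = Acq l \<longrightarrow>
      (\<exists>q \<in> set T. thd q = thd a \<and> op q = Req l \<and> before T q a \<and>
         \<not> (\<exists>g \<in> set T. thd g = thd a \<and> before T q g \<and> before T g a))) \<and>
    (\<forall>q \<in> set T. \<forall>l. op q = Req l \<longrightarrow>
      (\<forall>f \<in> set T. thd f = thd q \<and> before T q f \<and>
         \<not> (\<exists>g \<in> set T. thd g = thd q \<and> before T q g \<and> before T g f) \<longrightarrow>
         op f = Acq l))"

definition well_formed :: "('t, 'v, 'l) trace \<Rightarrow> bool" where
  "well_formed T \<longleftrightarrow> is_trace T \<and> wf_acq T \<and> wf_rel T \<and> wf_req T"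

definition acq_matched :: "('t, 'v, 'l) trace \<Rightarrow> bool" where
  "acq_matched T \<longleftrightarrow> (\<forall>a \<in> set T. \<forall>l. op a = Acq l \<longrightarrow>
      (\<exists>r \<in> set T. thd r = thd a \<and> op r = Rel l \<and> before T a r \<and>
         \<not> (\<exists>r' \<in> set T. op r' = Rel l \<and> before T a r' \<and> before T r' r)))"

definition is_lw :: "('t, 'v, 'l) trace \<Rightarrow> ('t, 'v, 'l) event \<Rightarrow> ('t, 'v, 'l) event \<Rightarrow> bool" where
  "is_lw T e f \<longleftrightarrow> (\<exists>x. op e = Rd x \<and> op f = Wr x \<and> f \<in> set T \<and> e \<in> set T \<and> before T f e \<and>
      \<not> (\<exists>g \<in> set T. op g = Wr x \<and> before T f g \<and> before T g e))"

definition thread_proj :: "'t \<Rightarrow> ('t, 'v, 'l) trace \<Rightarrow> ('t, 'v, 'l) trace" where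
  "thread_proj t T = filter (\<lambda>e. thd e = t) T"

definition crp :: "('t, 'v, 'l) trace \<Rightarrow> ('t, 'v, 'l) trace set" where
  "crp T = {T'. well_formed T' \<and> set T' \<subseteq> set T \<and>
      (\<forall>t \<in> thd ` set T'. prefix (thread_proj t T') (thread_proj t T)) \<and>
      (\<forall>e \<in> set T'. \<forall>f. (\<exists>x. op e = Rd x) \<and> is_lw T e f \<longrightarrow> is_lw T' e f)}"

definition must_before :: "('t, 'v, 'l) trace \<Rightarrow> ('t, 'v, 'l) event \<Rightarrow> ('t, 'v, 'l) event \<Rightarrow> bool" where
  "must_before T e f \<longleftrightarrow> (\<forall>T' \<in> crp T. f \<in> set T' \<longrightarrow> e \<in> set T' \<and> before T' e f)"

definition cs_match :: "('t, 'v, 'l) trace \<Rightarrow> ('t, 'v, 'l) event \<Rightarrow> 'l \<Rightarrow> ('t, 'v, 'l) event \<Rightarrow> bool" where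
  "cs_match T a l e \<longleftrightarrow> \<not> (\<exists>r' \<in> set T. \<exists>T' \<in> crp T. thd r' = thd a \<and> op r' = Rel l \<and>
      before T' a r' \<and> before T' r' e)"

definition CS_T :: "('t, 'v, 'l) trace \<Rightarrow> ('t, 'v, 'l) event \<Rightarrow> ('t, 'v, 'l) event \<Rightarrow> ('t, 'v, 'l) event set" where
  "CS_T T a r = {e. must_before T a e \<and> must_before T e r \<and>
      (\<forall>l. op a = Acq l \<longrightarrow> cs_match T a l e)}"

definition LH_T :: "('t, 'v, 'l) trace \<Rightarrow> ('t, 'v, 'l) event \<Rightarrow> ('l \<times> 't) set" where
  "LH_T T e = {(l, t). \<exists>a \<in> set T. \<exists>r \<in> set T. thd a = t \<and> op a = Acq l \<and>
      thd r = t \<and> op r = Rel l \<and> e \<in> CS_T T a r}"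

definition CS_po :: "('t, 'v, 'l) trace \<Rightarrow> (('t, 'v, 'l) event \<Rightarrow> ('t, 'v, 'l) event \<Rightarrow> bool)
    \<Rightarrow> ('t, 'v, 'l) event \<Rightarrow> ('t, 'v, 'l) event \<Rightarrow> ('t, 'v, 'l) event set" where
  "CS_po T R a r = {e. R a e \<and> R e r \<and> (\<forall>l. op a = Acq l \<longrightarrow> cs_match T a l e)}"

definition LH_po :: "('t, 'v, 'l) trace \<Rightarrow> (('t, 'v, 'l) event \<Rightarrow> ('t, 'v, 'l) event \<Rightarrow> bool)
    \<Rightarrow> ('t, 'v, 'l) event \<Rightarrow> ('l \<times> 't) set" where
  "LH_po T R e = {(l, t). \<exists>a \<in> set T. \<exists>r \<in> set T. thd a = t \<and> op a = Acq l \<and>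
      thd r = t \<and> op r = Rel l \<and> e \<in> CS_po T R a r}"

definition strict_po_on :: "('t, 'v, 'l) trace \<Rightarrow> (('t, 'v, 'l) event \<Rightarrow> ('t, 'v, 'l) event \<Rightarrow> bool) \<Rightarrow> bool" where
  "strict_po_on T R \<longleftrightarrow> (\<forall>e f. R e f \<longrightarrow> e \<in> set T \<and> f \<in> set T) \<and>
      (\<forall>e. \<not> R e e) \<and> (\<forall>e f g. R e f \<and> R f g \<longrightarrow> R e g)"

definition mhb_criteria :: "('t, 'v, 'l) trace \<Rightarrow> (('t, 'v, 'l) event \<Rightarrow> ('t, 'v, 'l) event \<Rightarrow> bool) \<Rightarrow> bool" where
  "mhb_criteria T R \<longleftrightarrow> (\<forall>e f. R e f \<longrightarrow> must_before T e f)"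

definition lock_inter :: "('l \<times> 't) set \<Rightarrow> ('l \<times> 't) set \<Rightarrow> 'l set" where
  "lock_inter M N = {l. \<exists>s t. (l, s) \<in> M \<and> (l, t) \<in> N \<and> s \<noteq> t}"

definition lock_in :: "'l \<Rightarrow> ('l \<times> 't) set \<Rightarrow> bool" where
  "lock_in l M \<longleftrightarrow> (\<exists>t. (l, t) \<in> M)"

text \<open>Deadlock pattern given by an enumeration q_0 .. q_(n-1) (0-based indices),
  with request locks ls.\<close>
definition deadlock_pattern :: "('t, 'v, 'l) trace \<Rightarrow> (('t, 'v, 'l) event \<Rightarrow> ('l \<times> 't) set)
    \<Rightarrow> ('t, 'v, 'l) event list \<Rightarrow> bool" where
  "deadlock_pattern T L qs \<longleftrightarrow> (let n = length qs in
     n > 1 \<and>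
     (\<exists>ls :: 'l list. length ls = n \<and>
        (\<forall>i < n. qs ! i \<in> set T \<and> op (qs ! i) = Req (ls ! i)) \<and>
        (\<forall>i < n. \<forall>j < n. i \<noteq> j \<longrightarrow> thd (qs ! i) \<noteq> thd (qs ! j)) \<and>
        (\<forall>i < n. lock_in (ls ! i) (L (qs ! (Suc i mod n)))) \<and>
        (\<forall>i < n. \<forall>j < n. i \<noteq> j \<longrightarrow> lock_inter (L (qs ! i)) (L (qs ! j)) = {})))"

definition predictable_deadlock :: "('t, 'v, 'l) trace \<Rightarrow> (('t, 'v, 'l) event \<Rightarrow> ('l \<times> 't) set)
    \<Rightarrow> ('t, 'v, 'l) event list \<Rightarrow> bool" where
  "predictable_deadlock T L qs \<longleftrightarrow> deadlock_pattern T L qs \<and>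
     (\<exists>T' \<in> crp T. \<forall>q \<in> set qs. final T' q)"

definition PD :: "('t, 'v, 'l) trace \<Rightarrow> (('t, 'v, 'l) event \<Rightarrow> ('l \<times> 't) set)
    \<Rightarrow> ('t, 'v, 'l) event set set" where
  "PD T L = {set qs | qs. predictable_deadlock T L qs}"

end

theory Submission
  imports Defs
begin

lemma before_Nil [simp]: "\<not> before [] x y"
  by (simp add: before_def)

lemma before_Cons: "before (z # xs) x y \<longleftrightarrow> (z = x \<and> y \<in> set xs) \<or> before xs x y"
proof
  assume "before (z # xs) x y"
  then obtain i j where ij: "i < j" "j < length (z # xs)" "(z # xs) ! i = x" "(z # xs) ! j = y"
    by (auto simp: before_def)
  show "(z = x \<and> y \<in> set xs) \<or> before xs x y"
  proof (cases i)
    case 0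
    then have "z = x" using ij by simp
    moreover have "y \<in> set xs" using ij
      by (cases j) (auto simp: in_set_conv_nth)
    ultimately show ?thesis by simp
  next
    case (Suc i')
    then obtain j' where "j = Suc j'" using ij by (cases j) auto
    then have "before xs x y" unfolding before_def using ij Suc
      by (intro exI[of _ i'] exI[of _ j']) auto
    then show ?thesis by simp
  qed
next
  assume "(z = x \<and> y \<in> set xs) \<or> before xs x y"
  then show "before (z # xs) x y"
  proof
    assume "z = x \<and> y \<in> set xs"
    then obtain j where "j < length xs" "xs ! j = y" "z = x" by (auto simp: in_set_conv_nth)
    then show ?thesis unfolding before_def
      by (intro exI[of _ 0] exI[of _ "Suc j"]) auto
  next
    assume "before xs x y"
    then obtain i j where "i < j" "j < length xs" "xs ! i = x" "xs ! j = y"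
      by (auto simp: before_def)
    then show ?thesis unfolding before_def
      by (intro exI[of _ "Suc i"] exI[of _ "Suc j"]) auto
  qed
qed

lemma before_append: "before (xs @ ys) x y \<longleftrightarrow> before xs x y \<or> (x \<in> set xs \<and> y \<in> set ys) \<or> before ys x y"
  by (induction xs) (auto simp: before_Cons)

lemma before_set: "before xs x y \<Longrightarrow> x \<in> set xs \<and> y \<in> set xs"
  by (induction xs) (auto simp: before_Cons)

lemma before_total: "x \<in> set xs \<Longrightarrow> y \<in> set xs \<Longrightarrow> x \<noteq> y \<Longrightarrow> before xs x y \<or> before xs y x"
  by (induction xs) (auto simp: before_Cons)

lemma move_end:
  assumes T': "T' \<in> crp T" and fin: "final T' q" and opq: "op q = Req l0"
  shows "\<exists>T'' \<in> crp T. set T'' = set T' \<and>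
     (\<forall>x y. before T'' x y \<longleftrightarrow> (before T' x y \<and> x \<noteq> q \<and> y \<noteq> q) \<or> (x \<in> set T' \<and> x \<noteq> q \<and> y = q))"
proof -
  have wf: "well_formed T'" and sub: "set T' \<subseteq> set T"
    and pre: "\<forall>t \<in> thd ` set T'. prefix (thread_proj t T') (thread_proj t T)"
    and lw: "\<forall>e \<in> set T'. \<forall>f. (\<exists>x. op e = Rd x) \<and> is_lw T e f \<longrightarrow> is_lw T' e f"
    using T' by (auto simp: crp_def)
  have dm: "distinct (map eid T')" using wf by (simp add: well_formed_def is_trace_def)
  then have dT: "distinct T'" by (simp add: distinct_map)
  have qin: "q \<in> set T'" using fin by (simp add: final_def)
  then obtain us vs where T'eq: "T' = us @ q # vs" by (meson split_list)
  have qus: "q \<notin> set us" and qvs: "q \<notin> set vs" using dT T'eq by auto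
  have nf: "\<And>f. f \<in> set T' \<Longrightarrow> thd f = thd q \<Longrightarrow> \<not> before T' q f"
    using fin by (auto simp: final_def)
  define T'' where "T'' = us @ vs @ [q]"
  have setT'': "set T'' = set T'" by (auto simp: T''_def T'eq)
  have B: "\<And>x y. before T'' x y \<longleftrightarrow> (before T' x y \<and> x \<noteq> q \<and> y \<noteq> q) \<or> (x \<in> set T' \<and> x \<noteq> q \<and> y = q)"
    unfolding T''_def T'eq using qus qvs
    by (auto simp: before_append before_Cons dest: before_set)
  have same: "\<And>x. x \<in> set T' \<Longrightarrow> thd x = thd q \<Longrightarrow> x \<noteq> q \<Longrightarrow> before T' x q"
    using nf before_total qin by blast
  have it: "is_trace T''"
    using dm by (auto simp: is_trace_def T''_def T'eq)
  have wa: "wf_acq T''"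
    using wf B setT'' unfolding well_formed_def wf_acq_def
    by (smt (verit) operation.distinct opq)
  have wr: "wf_rel T''"
    unfolding wf_rel_def setT''
  proof (intro ballI allI impI)
    have w: "\<forall>r\<in>set T'. \<forall>l. op r = Rel l \<longrightarrow>
        (\<exists>a\<in>set T'. thd a = thd r \<and> op a = Acq l \<and> before T' a r \<and>
            \<not> (\<exists>r'\<in>set T'. op r' = Rel l \<and> before T' a r' \<and> before T' r' r))"
      using wf by (simp add: well_formed_def wf_rel_def)
    fix r l assume r: "r \<in> set T'" "op r = Rel l"
    with w obtain a where a: "a \<in> set T'" "thd a = thd r" "op a = Acq l" "before T' a r"
      "\<not> (\<exists>r'\<in>set T'. op r' = Rel l \<and> before T' a r' \<and> before T' r' r)" by blast
    have "a \<noteq> q" "r \<noteq> q" using a r opq by auto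
    then show "\<exists>a\<in>set T'. thd a = thd r \<and> op a = Acq l \<and> before T'' a r \<and>
            \<not> (\<exists>r'\<in>set T'. op r' = Rel l \<and> before T'' a r' \<and> before T'' r' r)"
      using a B by (intro bexI[of _ a]) auto
  qed
  have wq: "wf_req T''"
    unfolding wf_req_def setT''
  proof (intro conjI ballI allI impI)
    fix a l assume a: "a \<in> set T'" "op a = Acq l"
    then obtain q' where q': "q' \<in> set T'" "thd q' = thd a" "op q' = Req l" "before T' q' a"
      "\<not> (\<exists>g\<in>set T'. thd g = thd a \<and> before T' q' g \<and> before T' g a)"
      using wf unfolding well_formed_def wf_req_def by blast
    have "a \<noteq> q" using a opq by auto
    have "q' \<noteq> q" using nf q' a by auto
    show "\<exists>q'\<in>set T'. thd q' = thd a \<and> op q' = Req l \<and> before T'' q' a \<and>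
         \<not> (\<exists>g\<in>set T'. thd g = thd a \<and> before T'' q' g \<and> before T'' g a)"
      using q' B \<open>a \<noteq> q\<close> \<open>q' \<noteq> q\<close> by (intro bexI[of _ q']) auto
  next
    fix q' l f assume q': "q' \<in> set T'" "op q' = Req l"
      and fT: "f \<in> set T'" and f0: "thd f = thd q' \<and> before T'' q' f \<and>
         \<not> (\<exists>g\<in>set T'. thd g = thd q' \<and> before T'' q' g \<and> before T'' g f)"
    note f = fT f0
    have "q' \<noteq> q" using f B by auto
    have bf: "before T' q' f"
    proof (cases "f = q")
      case True then show ?thesis using same f q' \<open>q' \<noteq> q\<close> by auto
    next
      case False then show ?thesis using f B by auto
    qed
    have ng: "\<not> (\<exists>g\<in>set T'. thd g = thd q' \<and> before T' q' g \<and> before T' g f)"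
    proof
      assume "\<exists>g\<in>set T'. thd g = thd q' \<and> before T' q' g \<and> before T' g f"
      then obtain g where g: "g \<in> set T'" "thd g = thd q'" "before T' q' g" "before T' g f" by blast
      have "g \<noteq> q"
      proof
        assume "g = q"
        then have "before T' q f" "thd f = thd q" using g f by auto
        then show False using nf f by auto
      qed
      then show False using g f B \<open>q' \<noteq> q\<close> by (auto dest: before_set)
    qed
    have "wf_req T'" using wf by (simp add: well_formed_def)
    then have "\<forall>q\<in>set T'. \<forall>l. op q = Req l \<longrightarrow>
      (\<forall>f \<in> set T'. thd f = thd q \<and> before T' q f \<and>
         \<not> (\<exists>g \<in> set T'. thd g = thd q \<and> before T' q g \<and> before T' g f) \<longrightarrow>
         op f = Acq l)" unfolding wf_req_def by (rule conjunct2)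
    then show "op f = Acq l"
      using q' f bf ng by blast
  qed
  have wfT'': "well_formed T''" using it wa wr wq by (simp add: well_formed_def)
  have tp: "\<And>t. thread_proj t T'' = thread_proj t T'"
  proof -
    fix t
    have "filter (\<lambda>e. thd e = thd q) vs = []"
      using nf same T'eq qvs
      by (auto simp: filter_empty_conv before_append before_Cons)
    then show "thread_proj t T'' = thread_proj t T'"
      unfolding thread_proj_def T''_def T'eq by (cases "thd q = t") auto
  qed
  have lw'': "\<forall>e \<in> set T''. \<forall>f. (\<exists>x. op e = Rd x) \<and> is_lw T e f \<longrightarrow> is_lw T'' e f"
  proof (intro ballI allI impI)
    fix e f assume e: "e \<in> set T''" and h: "(\<exists>x. op e = Rd x) \<and> is_lw T e f"
    then have "is_lw T' e f" using lw setT'' by auto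
    moreover have "e \<noteq> q" "f \<noteq> q" using h opq by (auto simp: is_lw_def)
    ultimately show "is_lw T'' e f" unfolding is_lw_def using B setT''
      by (smt (verit) operation.distinct opq)
  qed
  have "T'' \<in> crp T" unfolding crp_def using wfT'' sub setT'' pre tp lw'' by auto
  then show ?thesis using setT'' B by blast
qed

lemma held:
  assumes T': "T' \<in> crp T" and fin: "final T' q" and opq: "op q = Req l0"
    and lh: "(l, s) \<in> LH_T T q"
  shows "\<exists>a \<in> set T'. thd a = s \<and> op a = Acq l \<and>
     \<not> (\<exists>r' \<in> set T'. thd r' = s \<and> op r' = Rel l \<and> before T' a r')"
proof -
  obtain a r where a: "a \<in> set T" "thd a = s" "op a = Acq l" "q \<in> CS_T T a r"
    using lh by (auto simp: LH_T_def)
  have qin: "q \<in> set T'" using fin by (simp add: final_def)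
  have mb: "must_before T a q" and cm: "cs_match T a l q" using a by (auto simp: CS_T_def)
  have aT': "a \<in> set T'" "before T' a q" using mb T' qin by (auto simp: must_before_def)
  show ?thesis
  proof (intro bexI[OF _ aT'(1)] conjI a(2,3) notI)
    assume "\<exists>r' \<in> set T'. thd r' = s \<and> op r' = Rel l \<and> before T' a r'"
    then obtain r' where r': "r' \<in> set T'" "thd r' = s" "op r' = Rel l" "before T' a r'" by blast
    obtain T'' where T'': "T'' \<in> crp T" "set T'' = set T'"
      "\<forall>x y. before T'' x y \<longleftrightarrow> (before T' x y \<and> x \<noteq> q \<and> y \<noteq> q) \<or> (x \<in> set T' \<and> x \<noteq> q \<and> y = q)"
      using move_end[OF T' fin opq] by blast
    have ne: "a \<noteq> q" "r' \<noteq> q" using a r' opq by auto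
    have "before T'' a r'" "before T'' r' q" using T''(3) r' ne by auto
    moreover have "r' \<in> set T" using r' T' by (auto simp: crp_def)
    ultimately have "\<exists>r'\<in>set T. \<exists>T'\<in>crp T. thd r' = thd a \<and> op r' = Rel l \<and> before T' a r' \<and> before T' r' q"
      using T''(1) r' a by (intro bexI[of _ r'] bexI[of _ T'']) auto
    then show False using cm unfolding cs_match_def by blast
  qed
qed

lemma guard:
  assumes T': "T' \<in> crp T" and f1: "final T' q1" and o1: "op q1 = Req l1"
    and f2: "final T' q2" and o2: "op q2 = Req l2"
  shows "lock_inter (LH_T T q1) (LH_T T q2) = {}"
proof (rule ccontr)
  assume "lock_inter (LH_T T q1) (LH_T T q2) \<noteq> {}"
  then obtain l s t where h: "(l, s) \<in> LH_T T q1" "(l, t) \<in> LH_T T q2" "s \<noteq> t"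
    by (auto simp: lock_inter_def)
  obtain a1 where a1: "a1 \<in> set T'" "thd a1 = s" "op a1 = Acq l"
     "\<not> (\<exists>r' \<in> set T'. thd r' = s \<and> op r' = Rel l \<and> before T' a1 r')"
    using held[OF T' f1 o1 h(1)] by blast
  obtain a2 where a2: "a2 \<in> set T'" "thd a2 = t" "op a2 = Acq l"
     "\<not> (\<exists>r' \<in> set T'. thd r' = t \<and> op r' = Rel l \<and> before T' a2 r')"
    using held[OF T' f2 o2 h(2)] by blast
  have wa: "wf_acq T'" using T' by (simp add: crp_def well_formed_def)
  have "a1 \<noteq> a2" using a1 a2 h by auto
  then have "before T' a1 a2 \<or> before T' a2 a1" using before_total a1 a2 by blast
  then show False
  proof
    assume "before T' a1 a2"
    then show False using wa a1 a2 unfolding wf_acq_def by blast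
  next
    assume "before T' a2 a1"
    then show False using wa a1 a2 unfolding wf_acq_def by blast
  qed
qed

lemma LH_sub:
  assumes "mhb_criteria T R"
  shows "LH_po T R e \<subseteq> LH_T T e"
  using assms unfolding LH_po_def LH_T_def CS_po_def CS_T_def mhb_criteria_def by blast

theorem lemma6p6:
  fixes T :: "('t, 'v, 'l) trace"
    and R :: "('t, 'v, 'l) event \<Rightarrow> ('t, 'v, 'l) event \<Rightarrow> bool"
  assumes "well_formed T"
    and "acq_matched T"
    and "strict_po_on T R"
    and "mhb_criteria T R"
  shows "PD T (LH_po T R) \<subseteq> PD T (LH_T T)"
proof
  fix X assume "X \<in> PD T (LH_po T R)"
  then obtain qs where X: "X = set qs" and pd: "predictable_deadlock T (LH_po T R) qs"
    by (auto simp: PD_def)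
  obtain T' where T': "T' \<in> crp T" "\<forall>q \<in> set qs. final T' q"
    using pd by (auto simp: predictable_deadlock_def)
  obtain ls where ls: "length qs > 1" "length ls = length qs"
    "\<forall>i < length qs. qs ! i \<in> set T \<and> op (qs ! i) = Req (ls ! i)"
    "\<forall>i < length qs. \<forall>j < length qs. i \<noteq> j \<longrightarrow> thd (qs ! i) \<noteq> thd (qs ! j)"
    "\<forall>i < length qs. lock_in (ls ! i) (LH_po T R (qs ! (Suc i mod length qs)))"
    using pd by (auto simp: predictable_deadlock_def deadlock_pattern_def Let_def)
  have cyc: "\<forall>i < length qs. lock_in (ls ! i) (LH_T T (qs ! (Suc i mod length qs)))"
    using ls(5) LH_sub[OF assms(4)] unfolding lock_in_def by blast
  have gd: "\<forall>i < length qs. \<forall>j < length qs. i \<noteq> j \<longrightarrow>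
      lock_inter (LH_T T (qs ! i)) (LH_T T (qs ! j)) = {}"
  proof (intro allI impI)
    fix i j assume "i < length qs" "j < length qs" "i \<noteq> j"
    then show "lock_inter (LH_T T (qs ! i)) (LH_T T (qs ! j)) = {}"
      using guard[OF T'(1)] T'(2) ls(3) by (meson nth_mem)
  qed
  have "predictable_deadlock T (LH_T T) qs"
    unfolding predictable_deadlock_def deadlock_pattern_def Let_def
    using ls cyc gd T' by blast
  then show "X \<in> PD T (LH_T T)" using X by (auto simp: PD_def)
qed

end
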